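(* Let $P,Q$ be probability measures with $P\ll Q$, let $\beta>1$, let $E$ be measurable with $q:=Q(E)\in(0,1)$, and set $\mathcal H_\beta:=\mathcal H_\beta(P\Vert Q)$ and $$u_0:=\min\Big\{1,\ \big((1+(\beta-1)\mathcal H_\beta)\,q^{\beta-1}\big)^{1/\beta}\Big\}.$$ Then $$P(E)\le\Big(q^{\beta-1}\big[1+(\beta-1)\mathcal H_\beta-(1-q)^{1-\beta}(1-u_0)^\beta\big]_+\Big)^{1/\beta}.$$
   Context: For $P\ll Q$ and $\beta>1$, $\mathcal H_\beta(P\Vert Q):=\int \frac{(\mathrm dP/\mathrm dQ)^\beta-1}{\beta-1}\,\mathrm dQ$ (the power divergence of order $\beta$). $[x]_+:=\max\{x,0\}$. *)

theory Defs
  imports "HOL-Probability.Probability"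
begin

text \<open>Power divergence of order beta, for P absolutely continuous w.r.t. Q:
  H_beta(P||Q) = integral over Q of ((dP/dQ)^beta - 1)/(beta - 1).
  Since Q is a probability measure this equals (integral of (dP/dQ)^beta dQ - 1)/(beta - 1);
  the value is taken in the extended reals so that it may be +infinity.\<close>
definition power_divergence :: "real \<Rightarrow> 'a measure \<Rightarrow> 'a measure \<Rightarrow> ereal" where
  "power_divergence \<beta> P Q =
     (enn2ereal (\<integral>\<^sup>+ x. ennreal ((enn2real (RN_deriv Q P x)) powr \<beta>) \<partial>Q) - 1) / ereal (\<beta> - 1)"

end

theory Submission imports Defs begin

lemma young_aux:
  fixes x c \<beta> :: real
  assumes b: "\<beta> > 1" and x: "x \<ge> 0" and c: "c \<ge> 0"
  shows "\<beta> * c powr (\<beta>-1) * x \<le> x powr \<beta> + (\<beta>-1) * c powr \<beta>"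
proof -
  have h: "1/\<beta> + 1/(\<beta>/(\<beta>-1)) = 1" using b by (simp add: field_simps)
  have "\<beta>/(\<beta>-1) > 1" using b by simp
  from Youngs_inequality[OF b this h x, of "c powr (\<beta>-1)"]
  have "x * c powr (\<beta>-1) \<le> x powr \<beta> / \<beta> + (c powr (\<beta>-1)) powr (\<beta>/(\<beta>-1)) / (\<beta>/(\<beta>-1))"
    by simp
  also have "(c powr (\<beta>-1)) powr (\<beta>/(\<beta>-1)) = c powr \<beta>"
    using b by (simp add: powr_powr)
  finally have "x * c powr (\<beta>-1) \<le> x powr \<beta> / \<beta> + c powr \<beta> * (\<beta>-1) / \<beta>" by simp
  then have "\<beta> * (x * c powr (\<beta>-1)) \<le> \<beta> * (x powr \<beta> / \<beta> + c powr \<beta> * (\<beta>-1) / \<beta>)"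
    using b by (intro mult_left_mono) auto
  also have "\<beta> * (x powr \<beta> / \<beta> + c powr \<beta> * (\<beta>-1) / \<beta>) = x powr \<beta> + (\<beta>-1) * c powr \<beta>"
    using b by (simp add: field_simps)
  finally show ?thesis by (simp add: mult.assoc mult.commute mult.left_commute)
qed

lemma powr_div_mult:
  fixes x y \<beta> :: real
  assumes "x \<ge> 0" "y > 0"
  shows "(x/y) powr \<beta> * y = x powr \<beta> * y powr (1-\<beta>)"
proof -
  have "y powr (1-\<beta>) = y powr 1 / y powr \<beta>" by (rule powr_diff)
  then have "y powr (1-\<beta>) = y / y powr \<beta>" using assms by simp
  then show ?thesis using assms by (simp add: powr_divide)
qed

lemma powr_root_le:
  fixes p z \<beta> :: real
  assumes "\<beta> > 0" "p \<ge> 0" "p powr \<beta> \<le> z"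
  shows "p \<le> z powr (1/\<beta>)"
proof -
  have "(p powr \<beta>) powr (1/\<beta>) \<le> z powr (1/\<beta>)"
    using assms by (intro powr_mono2) auto
  moreover have "(p powr \<beta>) powr (1/\<beta>) = p" using assms by (simp add: powr_powr)
  ultimately show ?thesis by simp
qed

lemma powr_mult_self:
  fixes a \<beta> :: real
  assumes "a \<ge> 0"
  shows "a powr (\<beta>-1) * a = a powr \<beta>"
proof (cases "a = 0")
  case False
  have "a powr (\<beta>-1+1) = a powr (\<beta>-1) * a powr 1" by (rule powr_add)
  then have "a powr (\<beta>-1) * a powr 1 = a powr \<beta>" by simp
  moreover have "a powr 1 = a" using assms by simp
  ultimately show ?thesis by simp
qed simp

theorem mainTheorem3:
  fixes P Q :: "'a measure" and \<beta> :: real and E :: "'a set"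
  assumes "prob_space P" and "prob_space Q"
    and "sets P = sets Q"
    and "absolutely_continuous Q P"
    and "\<beta> > 1"
    and "E \<in> sets Q"
    and "0 < measure Q E" and "measure Q E < 1"
  shows "power_divergence \<beta> P Q \<noteq> \<infinity> \<longrightarrow>
    (let q = measure Q E; H = real_of_ereal (power_divergence \<beta> P Q);
         u0 = min 1 (((1 + (\<beta> - 1) * H) * q powr (\<beta> - 1)) powr (1 / \<beta>))
     in measure P E \<le>
          (q powr (\<beta> - 1) * max 0 (1 + (\<beta> - 1) * H - (1 - q) powr (1 - \<beta>) * (1 - u0) powr \<beta>))
            powr (1 / \<beta>))"
proof
  assume fin: "power_divergence \<beta> P Q \<noteq> \<infinity>"
  interpret Q: prob_space Q by fact
  interpret P: prob_space P by fact
  note b = \<open>\<beta> > 1\<close>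
  note E[measurable] = \<open>E \<in> sets Q\<close>
  have spc: "space P = space Q" using assms(3) by (rule sets_eq_imp_space_eq)
  define f where "f x = enn2real (RN_deriv Q P x)" for x
  have fm[measurable]: "f \<in> borel_measurable Q" unfolding f_def by measurable
  have f0: "f x \<ge> 0" for x unfolding f_def by simp
  have sfP: "sigma_finite_measure P" by unfold_locales
  have AEf: "AE x in Q. RN_deriv Q P x = ennreal (f x)"
    using Q.RN_deriv_finite[OF sfP assms(4) assms(3)]
    by eventually_elim (simp add: f_def ennreal_enn2real_if)
  have Pd: "P = density Q (\<lambda>x. ennreal (f x))"
    using Q.density_RN_deriv[OF assms(4) assms(3)] density_cong[OF _ _ AEf] by simp
  have emP: "emeasure P A = (\<integral>\<^sup>+ x. ennreal (f x * indicator A x) \<partial>Q)" if A: "A \<in> sets Q" for A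
    apply (subst Pd)
    using A by (auto simp: emeasure_density intro!: nn_integral_cong split: split_indicator)
  have intfA: "integrable Q (\<lambda>x. f x * indicator A x)" and
    mP: "measure P A = (\<integral> x. f x * indicator A x \<partial>Q)" if A[measurable]: "A \<in> sets Q" for A
  proof -
    have "emeasure P A = ennreal (measure P A)" by (simp add: P.emeasure_eq_measure)
    then have e: "(\<integral>\<^sup>+ x. ennreal (f x * indicator A x) \<partial>Q) = ennreal (measure P A)"
      using emP[OF A] by simp
    show "integrable Q (\<lambda>x. f x * indicator A x)"
      by (rule integrableI_nn_integral_finite[OF _ _ e]) (auto simp: f0)
    show "measure P A = (\<integral> x. f x * indicator A x \<partial>Q)"
      by (subst integral_eq_nn_integral) (auto simp: f0 e)
  qed
  define N where "N = (\<integral>\<^sup>+ x. ennreal (f x powr \<beta>) \<partial>Q)"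
  have pd: "power_divergence \<beta> P Q = (enn2ereal N - 1) / ereal (\<beta> - 1)"
    unfolding power_divergence_def N_def f_def by simp
  have Nfin: "N \<noteq> \<top>"
  proof
    assume "N = \<top>"
    then have "power_divergence \<beta> P Q = \<infinity>" using pd b by simp
    then show False using fin by simp
  qed
  define Nr where "Nr = enn2real N"
  have NNr: "N = ennreal Nr" unfolding Nr_def using Nfin by (simp add: ennreal_enn2real_if)
  have Nr0: "Nr \<ge> 0" unfolding Nr_def by simp
  have HH: "1 + (\<beta> - 1) * real_of_ereal (power_divergence \<beta> P Q) = Nr"
  proof -
    have "power_divergence \<beta> P Q = ereal ((Nr - 1) / (\<beta> - 1))"
    proof -
      have "ereal Nr - 1 = ereal (Nr - 1)" by (simp add: one_ereal_def)
      then show ?thesis using pd NNr b Nr0 by (simp add: enn2ereal_ennreal)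
    qed
    then show ?thesis using b by simp
  qed
  have intN: "integrable Q (\<lambda>x. f x powr \<beta>)" and intNv: "(\<integral> x. f x powr \<beta> \<partial>Q) = Nr"
  proof -
    have e: "(\<integral>\<^sup>+ x. ennreal (f x powr \<beta>) \<partial>Q) = ennreal Nr" using NNr N_def by simp
    show "integrable Q (\<lambda>x. f x powr \<beta>)"
      by (rule integrableI_nn_integral_finite[OF _ _ e]) auto
    show "(\<integral> x. f x powr \<beta> \<partial>Q) = Nr"
      by (subst integral_eq_nn_integral) (auto simp: e Nr0)
  qed
  define q where "q = measure Q E"
  define p where "p = measure P E"
  have q0: "0 < q" "q < 1" using assms unfolding q_def by auto
  have p01: "0 \<le> p" "p \<le> 1" unfolding p_def by auto
  define Ec where "Ec = space Q - E"
  have Ec[measurable]: "Ec \<in> sets Q" unfolding Ec_def by auto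
  have qc: "measure Q Ec = 1 - q" unfolding Ec_def q_def by (simp add: Q.prob_compl)
  have pc: "measure P Ec = 1 - p" unfolding Ec_def p_def spc[symmetric]
    using assms(3) by (simp add: P.prob_compl)
  define a where "a = p / q"
  define c where "c = (1 - p) / (1 - q)"
  have a0: "a \<ge> 0" and c0: "c \<ge> 0" using p01 q0 unfolding a_def c_def by auto
  have ptw: "(\<beta> * a powr (\<beta>-1)) * (f x * indicator E x) - ((\<beta>-1) * a powr \<beta>) * indicator E x
      + ((\<beta> * c powr (\<beta>-1)) * (f x * indicator Ec x) - ((\<beta>-1) * c powr \<beta>) * indicator Ec x)
      \<le> f x powr \<beta>" if x: "x \<in> space Q" for x
  proof (cases "x \<in> E")
    case True
    then have "x \<notin> Ec" unfolding Ec_def by auto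
    with True show ?thesis using young_aux[OF b f0 a0, of x] by simp
  next
    case False
    then have "x \<in> Ec" unfolding Ec_def using x by auto
    with False show ?thesis using young_aux[OF b f0 c0, of x] by simp
  qed
  have iE: "integrable Q (indicator E :: _ \<Rightarrow> real)"
    by (rule integrable_real_indicator) (auto simp: Q.emeasure_eq_measure)
  have iEc: "integrable Q (indicator Ec :: _ \<Rightarrow> real)"
    by (rule integrable_real_indicator) (auto simp: Q.emeasure_eq_measure)
  define G where "G x = (\<beta> * a powr (\<beta>-1)) * (f x * indicator E x) - ((\<beta>-1) * a powr \<beta>) * indicator E x
      + ((\<beta> * c powr (\<beta>-1)) * (f x * indicator Ec x) - ((\<beta>-1) * c powr \<beta>) * indicator Ec x)" for x
  have iG: "integrable Q G" unfolding G_def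
    using iE iEc intfA[OF E] intfA[OF Ec]
    by (intro Bochner_Integration.integrable_add Bochner_Integration.integrable_diff integrable_mult_right; simp)
  have Gle: "(\<integral> x. G x \<partial>Q) \<le> Nr"
  proof -
    have "(\<integral> x. G x \<partial>Q) \<le> (\<integral> x. f x powr \<beta> \<partial>Q)"
    proof (rule integral_mono[OF iG intN])
      fix x assume "x \<in> space Q" then show "G x \<le> f x powr \<beta>" using ptw unfolding G_def by blast
    qed
    then show ?thesis using intNv by simp
  qed
  have Gv: "(\<integral> x. G x \<partial>Q) = (\<beta> * a powr (\<beta>-1)) * p - ((\<beta>-1) * a powr \<beta>) * q
      + ((\<beta> * c powr (\<beta>-1)) * (1 - p) - ((\<beta>-1) * c powr \<beta>) * (1 - q))"
  proof -
    have "(\<integral> x. G x \<partial>Q) = (\<beta> * a powr (\<beta>-1)) * (\<integral> x. f x * indicator E x \<partial>Q) - ((\<beta>-1) * a powr \<beta>) * (\<integral> x. indicator E x \<partial>Q)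
      + ((\<beta> * c powr (\<beta>-1)) * (\<integral> x. f x * indicator Ec x \<partial>Q) - ((\<beta>-1) * c powr \<beta>) * (\<integral> x. indicator Ec x \<partial>Q))"
      unfolding G_def using iE iEc intfA[OF E] intfA[OF Ec]
      by (simp add: Bochner_Integration.integral_add Bochner_Integration.integral_diff)
    also have "\<dots> = (\<beta> * a powr (\<beta>-1)) * p - ((\<beta>-1) * a powr \<beta>) * q
      + ((\<beta> * c powr (\<beta>-1)) * (1 - p) - ((\<beta>-1) * c powr \<beta>) * (1 - q))"
      using mP[OF E] mP[OF Ec] pc qc unfolding p_def q_def by simp
    finally show ?thesis .
  qed
  have key: "(\<beta> * a powr (\<beta>-1)) * p - ((\<beta>-1) * a powr \<beta>) * q
      + ((\<beta> * c powr (\<beta>-1)) * (1 - p) - ((\<beta>-1) * c powr \<beta>) * (1 - q)) \<le> Nr"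
    using Gle Gv by simp
  have ap: "a powr (\<beta>-1) * p = a powr \<beta> * q"
    using powr_mult_self[OF a0, of \<beta>] q0 unfolding a_def by (simp add: field_simps)
  have cp: "c powr (\<beta>-1) * (1-p) = c powr \<beta> * (1-q)"
    using powr_mult_self[OF c0, of \<beta>] q0 unfolding c_def by (simp add: field_simps)
  have key2: "a powr \<beta> * q + c powr \<beta> * (1 - q) \<le> Nr"
  proof -
    have "(\<beta> * a powr (\<beta>-1)) * p - ((\<beta>-1) * a powr \<beta>) * q
      + ((\<beta> * c powr (\<beta>-1)) * (1 - p) - ((\<beta>-1) * c powr \<beta>) * (1 - q))
      = \<beta> * (a powr (\<beta>-1) * p) - (\<beta>-1) * (a powr \<beta> * q)
      + (\<beta> * (c powr (\<beta>-1) * (1-p)) - (\<beta>-1) * (c powr \<beta> * (1 - q)))"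
      by (simp add: algebra_simps)
    also have "\<dots> = a powr \<beta> * q + c powr \<beta> * (1 - q)"
      unfolding ap cp by (simp add: algebra_simps)
    finally show ?thesis using key by simp
  qed
  show "let q = measure Q E; H = real_of_ereal (power_divergence \<beta> P Q);
         u0 = min 1 (((1 + (\<beta> - 1) * H) * q powr (\<beta> - 1)) powr (1 / \<beta>))
     in measure P E \<le>
          (q powr (\<beta> - 1) * max 0 (1 + (\<beta> - 1) * H - (1 - q) powr (1 - \<beta>) * (1 - u0) powr \<beta>))
            powr (1 / \<beta>)"
  proof -
    have s0: "a powr \<beta> * q = p powr \<beta> * q powr (1-\<beta>)"
      unfolding a_def using p01 q0 by (intro powr_div_mult) auto
    have s0c: "c powr \<beta> * (1-q) = (1-p) powr \<beta> * (1-q) powr (1-\<beta>)"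
      unfolding c_def using p01 q0 by (intro powr_div_mult) auto
    have qq: "q powr (1-\<beta>) * q powr (\<beta>-1) = 1"
      using q0 by (simp add: powr_add[symmetric])
    have cnn: "c powr \<beta> * (1 - q) \<ge> 0" using q0 by simp
    have s1: "p powr \<beta> * q powr (1-\<beta>) \<le> Nr" using key2 s0 cnn by linarith
    have "p powr \<beta> = (p powr \<beta> * q powr (1-\<beta>)) * q powr (\<beta>-1)"
      using qq by (simp add: mult.assoc)
    also have "\<dots> \<le> Nr * q powr (\<beta>-1)" using s1 by (intro mult_right_mono) auto
    finally have "p powr \<beta> \<le> Nr * q powr (\<beta>-1)" .
    then have pu: "p \<le> (Nr * q powr (\<beta>-1)) powr (1/\<beta>)"
      using b p01 by (intro powr_root_le) auto
    define u0 where "u0 = min 1 ((Nr * q powr (\<beta> - 1)) powr (1 / \<beta>))"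
    have "p \<le> u0" unfolding u0_def using pu p01 by simp
    then have "(1 - u0) powr \<beta> \<le> (1 - p) powr \<beta>"
      using b unfolding u0_def by (intro powr_mono2) auto
    then have "(1-q) powr (1-\<beta>) * (1 - u0) powr \<beta> \<le> (1-q) powr (1-\<beta>) * (1 - p) powr \<beta>"
      by (intro mult_left_mono) auto
    then have s2: "p powr \<beta> * q powr (1-\<beta>) \<le> Nr - (1-q) powr (1-\<beta>) * (1 - u0) powr \<beta>"
      using key2 s0 s0c by (simp add: algebra_simps)
    define D where "D = Nr - (1-q) powr (1-\<beta>) * (1 - u0) powr \<beta>"
    have D0: "D \<ge> 0" unfolding D_def using s2 by (smt (verit) powr_ge_zero mult_nonneg_nonneg)
    have "p powr \<beta> = (p powr \<beta> * q powr (1-\<beta>)) * q powr (\<beta>-1)"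
      using qq by (simp add: mult.assoc)
    also have "\<dots> \<le> D * q powr (\<beta>-1)" using s2 unfolding D_def by (intro mult_right_mono) auto
    finally have "p \<le> (q powr (\<beta>-1) * max 0 D) powr (1/\<beta>)"
      using b p01 D0 by (intro powr_root_le) (auto simp: mult.commute)
    then show ?thesis unfolding Let_def HH D_def u0_def p_def q_def by simp
  qed
qed

end
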